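(* There is an absolute constant $K$ such that for every integer $c \ge 0$ there is a deterministic finite automaton over the alphabet $\{0,1\}\times\{0,1\}$, reading its input most significant digit first, with at most $K\max(1,\log c)$ states (not counting a dead state), which accepts a word $x \times y$ (with $x,y$ valid Fibonacci representations of the same length) if and only if $[x] + c = [y]$.
   Context: Fibonacci numbers: $F_0=0$, $F_1=1$, $F_k=F_{k-1}+F_{k-2}$. For a binary word $x = x_1\cdots x_\ell$, $[x] = \sum_{j=1}^{\ell} x_j F_{\ell-j+2}$. A valid Fibonacci representation is a binary word with no factor $11$; leading zeros are allowed. For words $x=x_1\cdots x_\ell$, $y=y_1\cdots y_\ell$ of equal length, $x\times y$ denotes the word $(x_1,y_1)\cdots(x_\ell,y_\ell)$ over $\{0,1\}^2$; the shorter of two representations is padded with leading zeros. Transition functions may be partial; a dead state (from which no accepting state is reachable) is not counted. *)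

theory Defs
  imports Complex_Main "HOL-Number_Theory.Fib"
begin

text \<open>Binary words are bool lists (True = digit 1), most significant digit first.
  Value: [x] = sum_{j=1}^{l} x_j F_{l-j+2}; with 0-based index j this is F_{l-j+1}.\<close>
definition fibval :: "bool list \<Rightarrow> nat" where
  "fibval x = (\<Sum>j<length x. if x ! j then fib (length x - j + 1) else 0)"

definition valid_fib :: "bool list \<Rightarrow> bool" where
  "valid_fib x \<longleftrightarrow> (\<forall>i. Suc i < length x \<longrightarrow> \<not> (x ! i \<and> x ! Suc i))"

fun dfa_run :: "('q \<Rightarrow> 'a \<Rightarrow> 'q option) \<Rightarrow> 'q \<Rightarrow> 'a list \<Rightarrow> 'q option" where
  "dfa_run \<delta> q [] = Some q"
| "dfa_run \<delta> q (a # w) = (case \<delta> q a of None \<Rightarrow> None | Some q' \<Rightarrow> dfa_run \<delta> q' w)"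

definition dfa_accepts :: "('q \<Rightarrow> 'a \<Rightarrow> 'q option) \<Rightarrow> 'q \<Rightarrow> 'q set \<Rightarrow> 'a list \<Rightarrow> bool" where
  "dfa_accepts \<delta> q0 F w \<longleftrightarrow> (\<exists>q. dfa_run \<delta> q0 w = Some q \<and> q \<in> F)"

text \<open>A dead state need not be included
  since transitions are partial; hence card Q counts the states without a dead state.\<close>
definition is_dfa :: "'q set \<Rightarrow> 'q \<Rightarrow> ('q \<Rightarrow> 'a \<Rightarrow> 'q option) \<Rightarrow> 'q set \<Rightarrow> bool" where
  "is_dfa Q q0 \<delta> F \<longleftrightarrow> finite Q \<and> q0 \<in> Q \<and> F \<subseteq> Q \<and>
     (\<forall>q\<in>Q. \<forall>a q'. \<delta> q a = Some q' \<longrightarrow> q' \<in> Q)"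

end

theory Submission imports Defs "HOL-Library.Nat_Bijection" begin

definition fibB :: "bool list \<Rightarrow> nat" where
  "fibB x = (\<Sum>j<length x. if x ! j then fib (length x - j) else 0)"

lemma fibval_snoc: "fibval (w @ [e]) = fibval w + fibB w + (if e then 1 else 0)"
proof -
  let ?k = "length w"
  have "fibval (w @ [e]) = (\<Sum>j<?k. if w ! j then fib (?k - j + 2) else 0) + (if e then 1 else 0)"
    unfolding fibval_def by (auto simp: nth_append numeral_2_eq_2 Suc_diff_le intro!: sum.cong arg_cong[where f=fib])
  also have "(\<Sum>j<?k. if w ! j then fib (?k - j + 2) else 0)
     = (\<Sum>j<?k. (if w ! j then fib (?k - j + 1) else 0) + (if w ! j then fib (?k - j) else 0))"
    by (rule sum.cong) (auto simp: fib_plus_2)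
  finally show ?thesis unfolding fibval_def fibB_def by (simp add: sum.distrib)
qed

lemma fibB_snoc: "fibB (w @ [e]) = fibval w + (if e then 1 else 0)"
proof -
  let ?k = "length w"
  have "fibB (w @ [e]) = (\<Sum>j<?k. if w ! j then fib (?k - j + 1) else 0) + (if e then 1 else 0)"
    unfolding fibB_def by (auto simp: nth_append intro!: sum.cong arg_cong[where f=fib])
  then show ?thesis unfolding fibval_def by simp
qed

lemma fibval_Nil[simp]: "fibval [] = 0" and fibB_Nil[simp]: "fibB [] = 0"
  by (simp_all add: fibval_def fibB_def)

lemma fibval_Cons: "fibval (e # t) = (if e then fib (length t + 2) else 0) + fibval t"
  unfolding fibval_def by (auto simp: lessThan_Suc_eq_insert_0 sum.reindex numeral_2_eq_2 intro!: sum.cong arg_cong[where f=fib])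

lemma decomp:
  "fibval (p @ s) = fibval p * fib (length s + 1) + fibB p * fib (length s) + fibval s \<and>
   fibB (p @ s) + fibB p * fib (length s) = fibval p * fib (length s) + fibB p * fib (length s + 1) + fibB s"
proof (induction s rule: rev_induct)
  case Nil then show ?case by simp
next
  case (snoc e s)
  then show ?case
    using fibval_snoc[of "p @ s" e] fibB_snoc[of "p @ s" e] fibval_snoc[of s e] fibB_snoc[of s e]
    by (simp add: fib_plus_2 algebra_simps)
qed

lemma valid_Cons: "valid_fib (e # t) \<longleftrightarrow> valid_fib t \<and> \<not> (e \<and> t \<noteq> [] \<and> hd t)"
  unfolding valid_fib_def
  apply (cases t)
   apply simp
  apply (auto simp: nth_Cons split: nat.splits)
  done

lemma fibval_bound: "valid_fib s \<Longrightarrow> fibval s < fib (length s + 2)"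
proof (induction s rule: length_induct)
  case (1 s)
  show ?case
  proof (cases s)
    case Nil then show ?thesis by simp
  next
    case (Cons e t)
    note v = "1.prems"[unfolded Cons valid_Cons]
    show ?thesis
    proof (cases e)
      case False
      have "fibval t < fib (length t + 2)" using 1 v Cons by auto
      moreover have "fib (length t + 2) \<le> fib (length s + 2)" using Cons by (simp add: fib_mono)
      ultimately show ?thesis using Cons False by (simp add: fibval_Cons)
    next
      case True
      show ?thesis
      proof (cases t)
        case Nil then show ?thesis using Cons True by (simp add: fibval_Cons numeral_3_eq_3)
      next
        case (Cons f u)
        then have "\<not> f" using v True by simp
        have vu: "valid_fib u" using v Cons valid_Cons by auto
        have "fibval u < fib (length u + 2)" using 1 vu Cons \<open>s = e # t\<close> by auto
        then show ?thesis using Cons \<open>s = e # t\<close> True \<open>\<not> f\<close>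
          by (simp add: fibval_Cons fib_plus_2[of "length u + 2"] fib_plus_2[of "length u + 1"]
               algebra_simps numeral_3_eq_3 numeral_2_eq_2)
      qed
    qed
  qed
qed

lemma valid_drop: "valid_fib x \<Longrightarrow> valid_fib (drop i x)"
  unfolding valid_fib_def by auto

lemma fib_ge: "n \<le> fib (n + 1)"
proof (induction n rule: fib.induct)
  case (3 n)
  then show ?case by (cases n) (auto simp: fib_plus_2)
qed auto


definition gr :: real where "gr = (1 + sqrt 5) / 2"

lemma gr_sq: "gr * gr = gr + 1"
  unfolding gr_def by (simp add: field_simps)

lemma gg: "gr * (gr * y) = gr * y + y"
proof -
  have "gr * (gr * y) = (gr * gr) * y" by simp
  also have "\<dots> = gr * y + y" using gr_sq by (simp add: algebra_simps)
  finally show ?thesis .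
qed

lemma gr_gt1: "1 < gr"
proof -
  have "1 < sqrt 5" by simp
  then show ?thesis unfolding gr_def by simp
qed

lemma gr_lt: "gr < 5/3"
proof -
  have "sqrt 5 < sqrt ((7/3)^2)" by (intro real_sqrt_less_mono) (simp add: power2_eq_square)
  then have "sqrt 5 < 7/3" by simp
  then show ?thesis unfolding gr_def by simp
qed

lemma phi_bound: "\<bar>real (fibval w) - gr * real (fibB w)\<bar> \<le> gr"
proof (induction w rule: rev_induct)
  case Nil then show ?case using gr_gt1 by simp
next
  case (snoc e w)
  define X where "X = real (fibval w) - gr * real (fibB w)"
  define E where "E = (if e then 1 else 0 :: real)"
  have "real (fibval (w @ [e])) - gr * real (fibB (w @ [e])) = (1 - gr) * (X + E)"
    unfolding fibval_snoc fibB_snoc X_def E_def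
    by (simp add: algebra_simps gg)
  also have "\<bar>\<dots>\<bar> = (gr - 1) * \<bar>X + E\<bar>" using gr_gt1 by (simp add: abs_mult)
  also have "\<dots> \<le> (gr - 1) * (gr + 1)"
  proof (rule mult_left_mono)
    have "\<bar>X\<bar> \<le> gr" using snoc X_def by simp
    moreover have "0 \<le> E" "E \<le> 1" by (auto simp: E_def)
    ultimately show "\<bar>X + E\<bar> \<le> gr + 1" by linarith
  qed (use gr_gt1 in simp)
  also have "\<dots> = gr" using gr_sq by (simp add: algebra_simps)
  finally show ?case .
qed

lemma gpow: "gr ^ (r + 1) = gr * fib (r + 1) + fib r"
proof (induction r)
  case 0 then show ?case by simp
next
  case (Suc r)
  have "gr ^ (Suc r + 1) = gr * gr ^ (r + 1)" by simp
  also have "\<dots> = gr * gr * fib (r + 1) + gr * fib r" using Suc by (simp add: algebra_simps)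
  also have "\<dots> = gr * (fib (r+1) + fib r) + fib (r + 1)" using gr_sq by (simp add: algebra_simps)
  finally show ?case by (simp add: fib_plus_2[of r, simplified numeral_2_eq_2] add.commute)
qed

lemma fib_le_gpow: "real (fib (n + 1)) \<le> gr ^ n"
proof (induction n rule: fib.induct)
  case 1 then show ?case by simp
next
  case 2 then show ?case using gr_gt1 by simp
next
  case (3 n)
  have "real (fib (Suc (Suc n) + 1)) = fib (Suc n + 1) + fib (n + 1)"
    by (simp add: fib_plus_2[of "Suc n", simplified numeral_2_eq_2])
  also have "\<dots> \<le> gr ^ Suc n + gr ^ n" using 3 by simp
  also have "\<dots> = gr ^ n * (gr + 1)" by (simp add: algebra_simps)
  also have "\<dots> = gr ^ Suc (Suc n)" by (simp add: algebra_simps gg)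
  finally show ?case .
qed

definition S :: "nat \<Rightarrow> (int \<times> int) set" where
  "S c = {(a, b). \<bar>real_of_int a - gr * b\<bar> \<le> 2 * gr \<and>
      (\<exists>r. \<bar>real c - a * fib (r + 1) - b * fib r\<bar> < fib (r + 2))}"

lemma S_key:
  assumes "(a, b) \<in> S c"
  shows "\<exists>r. \<bar>real c / gr ^ r - a\<bar> < 5 \<and> \<bar>real_of_int b - a / gr\<bar> \<le> 2"
proof -
  obtain r where r: "\<bar>real c - a * fib (r + 1) - b * fib r\<bar> < fib (r + 2)"
    and ab: "\<bar>real_of_int a - gr * b\<bar> \<le> 2 * gr" using assms unfolding S_def by auto
  have gp: "gr > 0" using gr_gt1 by simp
  have bb: "\<bar>real_of_int b - a / gr\<bar> \<le> 2"
  proof -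
    have "real_of_int b - a / gr = - (real_of_int a - gr * b) / gr" using gp by (simp add: field_simps)
    then have "\<bar>real_of_int b - a / gr\<bar> = \<bar>real_of_int a - gr * b\<bar> / gr" using gp by simp
    also have "\<dots> \<le> 2 * gr / gr" using ab gp by (intro divide_right_mono) auto
    finally show ?thesis using gp by simp
  qed
  have gr_r: "gr ^ r = fib (r + 1) + fib r / gr"
    using gpow[of r] gp by (simp add: field_simps)
  have eq: "real c - a * gr ^ r = (real c - a * fib (r + 1) - b * fib r) + (b - a / gr) * fib r"
    unfolding gr_r by (simp add: algebra_simps)
  have "\<bar>(b - a / gr) * fib r\<bar> \<le> 2 * fib r" using bb by (simp add: abs_mult mult_right_mono)
  then have "\<bar>real c - a * gr ^ r\<bar> < fib (r + 2) + 2 * fib r" using r eq by linarith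
  also have "\<dots> \<le> 3 * fib (r + 2)" using fib_mono[of r "r+2"] by simp
  also have "\<dots> \<le> 3 * gr ^ (r + 1)" using fib_le_gpow[of "r+1"] by simp
  finally have "\<bar>real c - a * gr ^ r\<bar> < 3 * gr * gr ^ r" by simp
  then have "\<bar>real c - a * gr ^ r\<bar> / gr ^ r < 3 * gr" using gp by (simp add: field_simps)
  moreover have "\<bar>real c - a * gr ^ r\<bar> / gr ^ r = \<bar>real c / gr ^ r - a\<bar>"
    using gp by (simp add: field_simps)
  ultimately have "\<bar>real c / gr ^ r - a\<bar> < 5" using gr_lt by linarith
  then show ?thesis using bb by blast
qed

lemma S_card:
  assumes R: "real c \<le> gr ^ R"
  shows "finite (S c) \<and> card (S c) \<le> 50 * R + 105"
proof -
  define t where "t r = \<lfloor>real c / gr ^ r\<rfloor>" for r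
  define Aset where "Aset = (\<Union>r\<le>R. {t r - 4 .. t r + 5}) \<union> {-5..5::int}"
  define T where "T = (\<lambda>(a, i). (a, \<lfloor>a / gr\<rfloor> + i)) ` (Aset \<times> {-2..2::int})"
  have gp: "gr > 0" using gr_gt1 by simp
  have sub: "S c \<subseteq> T"
  proof
    fix p assume p: "p \<in> S c"
    obtain a b where pab: "p = (a, b)" by (cases p)
    obtain r where r1: "\<bar>real c / gr ^ r - a\<bar> < 5" and r2: "\<bar>real_of_int b - a / gr\<bar> \<le> 2"
      using S_key p pab by blast
    have "a \<in> Aset"
    proof (cases "r \<le> R")
      case True
      have "t r - 4 \<le> a" "a \<le> t r + 5" using r1 unfolding t_def by linarith+
      then show ?thesis using True unfolding Aset_def by auto
    next
      case False
      have "gr ^ R \<le> gr ^ r" using False gr_gt1 by (intro power_increasing) auto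
      then have "real c / gr ^ r \<le> 1" using R gp by (simp add: field_simps)
      moreover have "0 \<le> real c / gr ^ r" using gp by simp
      ultimately have "-5 \<le> a" "a \<le> 5" using r1 by linarith+
      then show ?thesis unfolding Aset_def by auto
    qed
    moreover have "b - \<lfloor>a / gr\<rfloor> \<in> {-2..2}" using r2 by (simp, linarith)
    ultimately have "(a, b - \<lfloor>a / gr\<rfloor>) \<in> Aset \<times> {-2..2}" by simp
    then show "p \<in> T" unfolding T_def pab by (force intro: image_eqI)
  qed
  have finA: "finite Aset" unfolding Aset_def by auto
  have cA: "card Aset \<le> 10 * (R + 1) + 11"
  proof -
    have "card Aset \<le> card (\<Union>r\<le>R. {t r - 4 .. t r + 5}) + card {-5..5::int}"
      unfolding Aset_def by (rule card_Un_le)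
    also have "card (\<Union>r\<le>R. {t r - 4 .. t r + 5}) \<le> (\<Sum>r\<le>R. card {t r - 4 .. t r + 5})"
      by (rule card_UN_le) simp
    also have "\<dots> = (\<Sum>r\<le>R. 10)" by simp
    finally show ?thesis by simp
  qed
  have finT: "finite T" unfolding T_def using finA by simp
  have "card T \<le> card (Aset \<times> {-2..2::int})" unfolding T_def by (rule card_image_le) (use finA in simp)
  also have "\<dots> = card Aset * 5" by (simp add: card_cartesian_product)
  finally have cT: "card T \<le> card Aset * 5" .
  have "card Aset * 5 \<le> (10 * (R + 1) + 11) * 5" using cA by simp
  then have "card T \<le> 50 * R + 105" using cT by (simp add: algebra_simps)
  moreover have "card (S c) \<le> card T" using sub finT by (rule card_mono[rotated])
  ultimately show ?thesis using finite_subset[OF sub finT] by linarith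
qed


definition enc :: "int \<times> int \<Rightarrow> nat" where
  "enc p = prod_encode (int_encode (fst p), int_encode (snd p))"
definition dec :: "nat \<Rightarrow> int \<times> int" where
  "dec n = (int_decode (fst (prod_decode n)), int_decode (snd (prod_decode n)))"

lemma dec_enc[simp]: "dec (enc p) = p" by (simp add: enc_def dec_def)
lemma inj_enc: "inj_on enc A" by (metis dec_enc inj_onI)

definition step :: "int \<times> int \<Rightarrow> bool \<times> bool \<Rightarrow> int \<times> int" where
  "step p e = (fst p + snd p + (of_bool (snd e) - of_bool (fst e)), fst p + (of_bool (snd e) - of_bool (fst e)))"

definition dl :: "nat \<Rightarrow> nat \<Rightarrow> bool \<times> bool \<Rightarrow> nat option" where
  "dl c q e = (if step (dec q) e \<in> S c then Some (enc (step (dec q) e)) else None)"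

definition pr :: "bool list \<Rightarrow> bool list \<Rightarrow> int \<times> int" where
  "pr px py = (int (fibval py) - int (fibval px), int (fibB py) - int (fibB px))"

lemma step_pr: "step (pr px py) (ex, ey) = pr (px @ [ex]) (py @ [ey])"
  unfolding step_def pr_def fibval_snoc fibB_snoc by simp

lemma run:
  "length sx = length sy \<Longrightarrow>
   dfa_run (dl c) (enc (pr px py)) (zip sx sy) =
     (if (\<forall>i. 1 \<le> i \<and> i \<le> length sx \<longrightarrow> pr (px @ take i sx) (py @ take i sy) \<in> S c)
      then Some (enc (pr (px @ sx) (py @ sy))) else None)"
proof (induction sx arbitrary: sy px py)
  case Nil then show ?case by simp
next
  case (Cons ex sx)
  then obtain ey sy' where sy: "sy = ey # sy'" and l: "length sx = length sy'"
    by (cases sy) auto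
  have dlv: "dl c (enc (pr px py)) (ex, ey) =
      (if pr (px @ [ex]) (py @ [ey]) \<in> S c then Some (enc (pr (px @ [ex]) (py @ [ey]))) else None)"
    unfolding dl_def by (simp add: step_pr)
  show ?case
  proof (cases "pr (px @ [ex]) (py @ [ey]) \<in> S c")
    case False
    then show ?thesis using dlv sy by (auto intro!: exI[of _ 1])
  next
    case True
    have iff: "(\<forall>i. 1 \<le> i \<and> i \<le> length (ex # sx) \<longrightarrow> pr (px @ take i (ex # sx)) (py @ take i sy) \<in> S c)
      \<longleftrightarrow> (\<forall>i. 1 \<le> i \<and> i \<le> length sx \<longrightarrow> pr ((px @ [ex]) @ take i sx) ((py @ [ey]) @ take i sy') \<in> S c)"
    proof
      assume H: "\<forall>i. 1 \<le> i \<and> i \<le> length (ex # sx) \<longrightarrow> pr (px @ take i (ex # sx)) (py @ take i sy) \<in> S c"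
      show "\<forall>i. 1 \<le> i \<and> i \<le> length sx \<longrightarrow> pr ((px @ [ex]) @ take i sx) ((py @ [ey]) @ take i sy') \<in> S c"
      proof (intro allI impI)
        fix i assume "1 \<le> i \<and> i \<le> length sx"
        then show "pr ((px @ [ex]) @ take i sx) ((py @ [ey]) @ take i sy') \<in> S c"
          using H[rule_format, of "Suc i"] sy by simp
      qed
    next
      assume H: "\<forall>i. 1 \<le> i \<and> i \<le> length sx \<longrightarrow> pr ((px @ [ex]) @ take i sx) ((py @ [ey]) @ take i sy') \<in> S c"
      show "\<forall>i. 1 \<le> i \<and> i \<le> length (ex # sx) \<longrightarrow> pr (px @ take i (ex # sx)) (py @ take i sy) \<in> S c"
      proof (intro allI impI)
        fix i assume i: "1 \<le> i \<and> i \<le> length (ex # sx)"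
        show "pr (px @ take i (ex # sx)) (py @ take i sy) \<in> S c"
        proof (cases i)
          case 0 then show ?thesis using i by simp
        next
          case (Suc j)
          show ?thesis
          proof (cases j)
            case 0 then show ?thesis using Suc True sy by simp
          next
            case (Suc k)
            then show ?thesis using H[rule_format, of j] \<open>i = Suc j\<close> i sy by simp
          qed
        qed
      qed
    qed
    show ?thesis
      using Cons.IH[OF l, of "px @ [ex]" "py @ [ey]"] dlv True sy iff by simp
  qed
qed

lemma member:
  assumes v: "valid_fib x" "valid_fib y" and l: "length x = length y"
    and eq: "fibval x + c = fibval y" and i: "i \<le> length x"
  shows "pr (take i x) (take i y) \<in> S c"
proof -
  define px where "px = take i x"
  define py where "py = take i y"
  define sx where "sx = drop i x"
  define sy where "sy = drop i y"
  define r where "r = length sx"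
  have rsy: "length sy = r" unfolding r_def sx_def sy_def using l by simp
  have x: "x = px @ sx" "y = py @ sy" unfolding px_def sx_def py_def sy_def by simp_all
  have dx: "fibval x = fibval px * fib (r + 1) + fibB px * fib r + fibval sx"
    using decomp[of px sx] x r_def by simp
  have dy: "fibval y = fibval py * fib (r + 1) + fibB py * fib r + fibval sy"
    using decomp[of py sy] x rsy by simp
  have bx: "fibval sx < fib (r + 2)" using fibval_bound[OF valid_drop[OF v(1)]] unfolding sx_def r_def by simp
  have by': "fibval sy < fib (r + 2)" using fibval_bound[OF valid_drop[OF v(2)], of i] rsy unfolding sy_def by simp
  define a where "a = int (fibval py) - int (fibval px)"
  define b where "b = int (fibB py) - int (fibB px)"
  have "real c = real (fibval y) - real (fibval x)" using eq by linarith
  also have "\<dots> = a * fib (r + 1) + b * fib r + (real (fibval sy) - real (fibval sx))"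
    unfolding dx dy a_def b_def by (simp add: algebra_simps)
  finally have "\<bar>real c - a * fib (r + 1) - b * fib r\<bar> < fib (r + 2)"
    using bx by' by simp
  moreover have "\<bar>real_of_int a - gr * b\<bar> \<le> 2 * gr"
  proof -
    have "real_of_int a - gr * b = (real (fibval py) - gr * fibB py) - (real (fibval px) - gr * fibB px)"
      unfolding a_def b_def by (simp add: algebra_simps)
    then show ?thesis using phi_bound[of py] phi_bound[of px] by linarith
  qed
  ultimately show ?thesis unfolding S_def pr_def px_def[symmetric] py_def[symmetric] a_def[symmetric] b_def[symmetric]
    by blast
qed

lemma zero_in_S: "(0, 0) \<in> S c"
proof -
  have "real c < fib (c + 2)" using fib_ge[of "c+1"] by simp
  then show ?thesis unfolding S_def using gr_gt1 by auto
qed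

theorem theorem5:
  shows "\<exists>K::real. \<forall>c::nat. \<exists>(Q::nat set) q0 (\<delta>::nat \<Rightarrow> bool \<times> bool \<Rightarrow> nat option) F.
    is_dfa Q q0 \<delta> F \<and>
    real (card Q) \<le> K * max 1 (ln (real (max c 1))) \<and>
    (\<forall>x y. length x = length y \<longrightarrow> valid_fib x \<longrightarrow> valid_fib y \<longrightarrow>
       (dfa_accepts \<delta> q0 F (zip x y) \<longleftrightarrow> fibval x + c = fibval y))"
proof (rule exI[of _ "50 / ln gr + 155"], rule allI)
  fix c :: nat
  define m where "m = real (max c 1)"
  define L where "L = max 1 (ln m)"
  define R where "R = nat \<lceil>ln m / ln gr\<rceil>"
  have lg: "ln gr > 0" using gr_gt1 by simp
  have m1: "m \<ge> 1" unfolding m_def by simp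
  have lm: "ln m \<ge> 0" using m1 by simp
  have R1: "real R \<le> ln m / ln gr + 1" unfolding R_def using lm lg
    by (simp add: of_nat_nat)
  have R2: "ln m / ln gr \<le> real R"
  proof -
    have "0 \<le> ln m / ln gr" using lm lg by simp
    then have "0 \<le> \<lceil>ln m / ln gr\<rceil>" by simp
    then have "real R = of_int \<lceil>ln m / ln gr\<rceil>" unfolding R_def by (simp add: of_nat_nat)
    then show ?thesis using le_of_int_ceiling[of "ln m / ln gr"] by linarith
  qed
  have "real c \<le> gr ^ R"
  proof -
    have "ln m \<le> real R * ln gr" using R2 lg by (simp add: field_simps)
    also have "\<dots> = ln (gr ^ R)" using gr_gt1 by (simp add: ln_realpow)
    finally have "m \<le> gr ^ R" using m1 gr_gt1 by simp
    then show ?thesis unfolding m_def by simp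
  qed
  from S_card[OF this] have fin: "finite (S c)" and cS: "card (S c) \<le> 50 * R + 105" by auto
  define Q where "Q = enc ` S c"
  define F where "F = enc ` {p \<in> S c. fst p = int c}"
  have cQ: "card Q = card (S c)" unfolding Q_def by (rule card_image[OF inj_enc])
  have "real (card Q) \<le> 50 * real R + 105" using cS cQ by simp
  also have "\<dots> \<le> 50 * (ln m / ln gr) + 155" using R1 by simp
  also have "\<dots> \<le> (50 / ln gr + 155) * L"
  proof -
    have "ln m \<le> L" "1 \<le> L" unfolding L_def by auto
    then have "50 * (ln m / ln gr) \<le> 50 / ln gr * L" using lg by (simp add: field_simps)
    moreover have "155 \<le> 155 * L" using \<open>1 \<le> L\<close> by simp
    ultimately show ?thesis by (simp add: algebra_simps)
  qed
  finally have card: "real (card Q) \<le> (50 / ln gr + 155) * max 1 (ln (real (max c 1)))"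
    unfolding L_def m_def .
  have dfa: "is_dfa Q (enc (0, 0)) (dl c) F"
    unfolding is_dfa_def Q_def F_def using fin zero_in_S
    by (auto simp: dl_def split: if_splits)
  have acc: "dfa_accepts (dl c) (enc (0, 0)) F (zip x y) \<longleftrightarrow> fibval x + c = fibval y"
    if l: "length x = length y" and vx: "valid_fib x" and vy: "valid_fib y" for x y
  proof -
    have p0: "pr [] [] = (0, 0)" by (simp add: pr_def)
    have R: "dfa_run (dl c) (enc (0, 0)) (zip x y) =
     (if (\<forall>i. 1 \<le> i \<and> i \<le> length x \<longrightarrow> pr (take i x) (take i y) \<in> S c)
      then Some (enc (pr x y)) else None)"
      using run[OF l, of c "[]" "[]"] p0 by simp
    have inF: "enc p \<in> F \<longleftrightarrow> p \<in> S c \<and> fst p = int c" for p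
      unfolding F_def using inj_enc[of UNIV] by (auto dest: injD)
    show ?thesis
    proof
      assume "dfa_accepts (dl c) (enc (0, 0)) F (zip x y)"
      then have "enc (pr x y) \<in> F" unfolding dfa_accepts_def R by (auto split: if_splits)
      then have "fst (pr x y) = int c" using inF by blast
      then show "fibval x + c = fibval y" unfolding pr_def by simp
    next
      assume eq: "fibval x + c = fibval y"
      have "\<forall>i. 1 \<le> i \<and> i \<le> length x \<longrightarrow> pr (take i x) (take i y) \<in> S c"
        using member[OF vx vy l eq] by blast
      moreover have "pr x y \<in> S c" using member[OF vx vy l eq, of "length x"] l by simp
      moreover have "fst (pr x y) = int c" using eq unfolding pr_def by simp
      ultimately show "dfa_accepts (dl c) (enc (0, 0)) F (zip x y)"
        unfolding dfa_accepts_def R using inF by auto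
    qed
  qed
  show "\<exists>(Q::nat set) q0 (\<delta>::nat \<Rightarrow> bool \<times> bool \<Rightarrow> nat option) F.
    is_dfa Q q0 \<delta> F \<and>
    real (card Q) \<le> (50 / ln gr + 155) * max 1 (ln (real (max c 1))) \<and>
    (\<forall>x y. length x = length y \<longrightarrow> valid_fib x \<longrightarrow> valid_fib y \<longrightarrow>
       (dfa_accepts \<delta> q0 F (zip x y) \<longleftrightarrow> fibval x + c = fibval y))"
    using dfa card acc by blast
qed

end
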